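(* Let $\Omega$ be finite. Fix $p:\Omega\to(0,1]$ with $\sum_\omega p(\omega)=1$ and $\alpha\in\mathbb R$, and let $K=\{y\in[-\infty,\infty)^\Omega:\langle p,y\rangle\le\alpha\}$. Fix $\varepsilon>0$ and $x\in\mathbb R^\Omega$ with $\langle p,x\rangle=\alpha$. Then there is $\delta\in(0,\varepsilon)$ such that no point of $K\cap B(x,\delta)$ is weakly dominated by any point of $K\setminus B(x,\varepsilon)$.
   Context: $\langle f,g\rangle=\sum_\omega f(\omega)g(\omega)$ (with $a\cdot0=0$ for extended reals $a$). $\|z\|_\infty=\max_{\omega}|z(\omega)|$ for $z\in[-\infty,\infty)^\Omega$, and $B(z,r)=\{z':\|z'-z\|_\infty<r\}$. A point $w$ weakly dominates $y$ if $y(\omega)\le w(\omega)$ for all $\omega\in\Omega$. *)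

theory Defs
  imports "HOL-Analysis.Analysis"
begin

text \<open>Points of [-\<infinity>,\<infinity>)^\<Omega> are functions \<Omega> \<Rightarrow> ereal never taking the value \<infinity>.\<close>
definition ext_pts :: "('w \<Rightarrow> ereal) set" where
  "ext_pts = {y. \<forall>\<omega>. y \<omega> \<noteq> \<infinity>}"

definition pair_e :: "('w::finite \<Rightarrow> real) \<Rightarrow> ('w \<Rightarrow> ereal) \<Rightarrow> ereal" where
  "pair_e f g = (\<Sum>\<omega>\<in>UNIV. (if f \<omega> = 0 then 0 else ereal (f \<omega>) * g \<omega>))"

definition supnorm_e :: "('w::finite \<Rightarrow> ereal) \<Rightarrow> ereal" where
  "supnorm_e z = Max (range (\<lambda>\<omega>. \<bar>z \<omega>\<bar>))"

definition ball_e :: "('w::finite \<Rightarrow> ereal) \<Rightarrow> real \<Rightarrow> ('w \<Rightarrow> ereal) set" where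
  "ball_e z r = {z' \<in> ext_pts. supnorm_e (\<lambda>\<omega>. z' \<omega> - z \<omega>) < ereal r}"

definition K_set :: "('w::finite \<Rightarrow> real) \<Rightarrow> real \<Rightarrow> ('w \<Rightarrow> ereal) set" where
  "K_set p \<alpha> = {y \<in> ext_pts. pair_e p y \<le> ereal \<alpha>}"

definition weakly_dominates :: "('w \<Rightarrow> ereal) \<Rightarrow> ('w \<Rightarrow> ereal) \<Rightarrow> bool" where
  "weakly_dominates w y \<longleftrightarrow> (\<forall>\<omega>. y \<omega> \<le> w \<omega>)"

end

theory Submission
  imports Defs
begin

theorem lemma6:
  fixes p :: "'w::finite \<Rightarrow> real" and \<alpha> \<epsilon> :: real and x :: "'w \<Rightarrow> real"
  assumes "\<And>\<omega>. 0 < p \<omega> \<and> p \<omega> \<le> 1"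
    and "(\<Sum>\<omega>\<in>UNIV. p \<omega>) = 1"
    and "\<epsilon> > 0"
    and "(\<Sum>\<omega>\<in>UNIV. p \<omega> * x \<omega>) = \<alpha>"
  shows "\<exists>\<delta>. 0 < \<delta> \<and> \<delta> < \<epsilon> \<and>
     (\<forall>y \<in> K_set p \<alpha> \<inter> ball_e (\<lambda>\<omega>. ereal (x \<omega>)) \<delta>.
        \<forall>w \<in> K_set p \<alpha> - ball_e (\<lambda>\<omega>. ereal (x \<omega>)) \<epsilon>.
          \<not> weakly_dominates w y)"
proof -
  define pm where "pm = Min (range p)"
  have pm_in: "pm \<in> range p" unfolding pm_def by (intro Min_in) auto
  have pm_le: "pm \<le> p \<omega>" for \<omega> unfolding pm_def by (intro Min_le) auto
  have pm_pos: "0 < pm" using pm_in assms(1) by auto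
  have pm_le1: "pm \<le> 1" using pm_in assms(1) by auto
  define \<delta> where "\<delta> = pm * \<epsilon> / 2"
  have dpos: "0 < \<delta>" using pm_pos assms(3) by (simp add: \<delta>_def)
  have "pm * \<epsilon> \<le> 1 * \<epsilon>" using pm_le1 assms(3) by (intro mult_right_mono) auto
  hence dlt: "\<delta> < \<epsilon>" using assms(3) unfolding \<delta>_def by simp
  show ?thesis
  proof (intro exI conjI ballI dpos dlt notI)
    fix y w
    assume yK: "y \<in> K_set p \<alpha> \<inter> ball_e (\<lambda>\<omega>. ereal (x \<omega>)) \<delta>"
      and wK: "w \<in> K_set p \<alpha> - ball_e (\<lambda>\<omega>. ereal (x \<omega>)) \<epsilon>"
      and dom: "weakly_dominates w y"
    have yb: "\<bar>y \<omega> - ereal (x \<omega>)\<bar> < ereal \<delta>" for \<omega>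
    proof -
      have "\<bar>y \<omega> - ereal (x \<omega>)\<bar> \<le> supnorm_e (\<lambda>\<omega>. y \<omega> - ereal (x \<omega>))"
        unfolding supnorm_e_def by (intro Max_ge) auto
      also have "\<dots> < ereal \<delta>" using yK by (simp add: ball_e_def)
      finally show ?thesis .
    qed
    define yr where "yr \<omega> = real_of_ereal (y \<omega>)" for \<omega>
    define wr where "wr \<omega> = real_of_ereal (w \<omega>)" for \<omega>
    have yfin: "y \<omega> = ereal (yr \<omega>) \<and> x \<omega> - \<delta> < yr \<omega>" for \<omega>
    proof (cases "y \<omega>")
      case (real r)
      then show ?thesis using yb[of \<omega>] unfolding yr_def by (simp add: abs_less_iff)
    next
      case PInf then show ?thesis using yb[of \<omega>] by simp
    next
      case MInf then show ?thesis using yb[of \<omega>] by simp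
    qed
    have wle: "y \<omega> \<le> w \<omega>" for \<omega> using dom by (simp add: weakly_dominates_def)
    have wne: "w \<omega> \<noteq> \<infinity>" for \<omega> using wK by (simp add: K_set_def ext_pts_def)
    have wfin: "w \<omega> = ereal (wr \<omega>) \<and> yr \<omega> \<le> wr \<omega>" for \<omega>
    proof (cases "w \<omega>")
      case (real r)
      then show ?thesis using wle[of \<omega>] yfin[of \<omega>] unfolding wr_def by simp
    next
      case PInf then show ?thesis using wne[of \<omega>] by simp
    next
      case MInf then show ?thesis using wle[of \<omega>] yfin[of \<omega>] by simp
    qed
    have "\<not> supnorm_e (\<lambda>\<omega>. w \<omega> - ereal (x \<omega>)) < ereal \<epsilon>"
      using wK by (simp add: ball_e_def K_set_def)
    moreover have "supnorm_e (\<lambda>\<omega>. w \<omega> - ereal (x \<omega>)) \<in> range (\<lambda>\<omega>. \<bar>w \<omega> - ereal (x \<omega>)\<bar>)"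
      unfolding supnorm_e_def by (intro Max_in) auto
    ultimately obtain \<omega>0 where "\<not> \<bar>w \<omega>0 - ereal (x \<omega>0)\<bar> < ereal \<epsilon>" by auto
    hence "\<epsilon> \<le> \<bar>wr \<omega>0 - x \<omega>0\<bar>" using wfin[of \<omega>0] by auto
    hence w0: "\<epsilon> \<le> wr \<omega>0 - x \<omega>0" using wfin[of \<omega>0] yfin[of \<omega>0] dlt by auto
    have "pair_e p w = ereal (\<Sum>\<omega>\<in>UNIV. p \<omega> * wr \<omega>)"
    proof -
      have "pair_e p w = (\<Sum>\<omega>\<in>UNIV. ereal (p \<omega> * wr \<omega>))"
        unfolding pair_e_def
      proof (rule sum.cong[OF refl])
        fix \<omega> :: 'w
        have "p \<omega> \<noteq> 0" using assms(1)[of \<omega>] by linarith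
        then show "(if p \<omega> = 0 then 0 else ereal (p \<omega>) * w \<omega>) = ereal (p \<omega> * wr \<omega>)"
          using wfin[of \<omega>] by simp
      qed
      then show ?thesis by (simp only: sum_ereal)
    qed
    hence sw: "(\<Sum>\<omega>\<in>UNIV. p \<omega> * wr \<omega>) \<le> \<alpha>" using wK by (simp add: K_set_def)
    define f where "f \<omega> = p \<omega> * (wr \<omega> - x \<omega>) + \<delta> * p \<omega>" for \<omega>
    have fnn: "0 \<le> f \<omega>" for \<omega>
    proof -
      have "- \<delta> \<le> wr \<omega> - x \<omega>" using wfin[of \<omega>] yfin[of \<omega>] by auto
      hence "p \<omega> * (-\<delta>) \<le> p \<omega> * (wr \<omega> - x \<omega>)" using assms(1)[of \<omega>]
        by (intro mult_left_mono) auto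
      thus ?thesis unfolding f_def by (simp add: algebra_simps)
    qed
    have "f \<omega>0 \<le> sum f UNIV" using fnn by (intro member_le_sum) auto
    moreover have "pm * \<epsilon> \<le> f \<omega>0"
    proof -
      have "pm * \<epsilon> \<le> p \<omega>0 * (wr \<omega>0 - x \<omega>0)"
        using pm_le[of \<omega>0] w0 assms(3) pm_pos by (intro mult_mono) auto
      moreover have "0 \<le> \<delta> * p \<omega>0" using dpos assms(1)[of \<omega>0] by simp
      ultimately show ?thesis unfolding f_def by linarith
    qed
    moreover have "sum f UNIV = (\<Sum>\<omega>\<in>UNIV. p \<omega> * wr \<omega>) - \<alpha> + \<delta>"
      unfolding f_def using assms(2,4)
      by (simp add: sum.distrib sum_subtractf right_diff_distrib sum_distrib_left[symmetric])
    moreover have "0 < pm * \<epsilon>" using pm_pos assms(3) by simp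
    ultimately show False using sw unfolding \<delta>_def by linarith
  qed (simp_all add: dpos dlt)
qed

end
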